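(* For every binary matrix $A$, the base graph of $A$ is acyclic, both with respect to the binary setting and with respect to the boolean setting.
   Context: A set $X$ of $\{0,1\}$-vectors spans a vector $y$ in the binary (resp. boolean) sense if $y=\sum_{x\in X}c_xx$ with $c_x\in\{0,1\}$ using ordinary (resp. boolean, $1+1=1$) addition; $X$ spans a set $Y$ if it spans each vector of $Y$. A binary (resp. boolean) base of an $n\times m$ binary matrix $A$ is a set of $\{0,1\}$ column vectors of length $n$ spanning every column of $A$ in the corresponding sense, of minimum cardinality among such spanning sets. The base graph of $A$ (in the given setting) is the directed graph whose vertices are the bases of $A$, with a directed edge from a base $U$ to a different base $V$ whenever $U$ spans $V$. *)

theory Defs
  imports Main
begin

text \<open>Column vectors of length n with entries in {0,1} are represented as functions
  nat => nat that are 0/1-valued and vanish at indices >= n.\<close>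

definition zo_vec :: "nat \<Rightarrow> (nat \<Rightarrow> nat) \<Rightarrow> bool" where
  "zo_vec n x \<longleftrightarrow> (\<forall>i. x i \<in> {0,1}) \<and> (\<forall>i\<ge>n. x i = 0)"

definition bin_spans :: "(nat \<Rightarrow> nat) set \<Rightarrow> (nat \<Rightarrow> nat) \<Rightarrow> bool" where
  "bin_spans X y \<longleftrightarrow> (\<exists>S\<subseteq>X. finite S \<and> y = (\<lambda>i. \<Sum>x\<in>S. x i))"

text \<open>Boolean span: y is a boolean sum (1+1=1) of a subset of X.\<close>
definition bool_spans :: "(nat \<Rightarrow> nat) set \<Rightarrow> (nat \<Rightarrow> nat) \<Rightarrow> bool" where
  "bool_spans X y \<longleftrightarrow> (\<exists>S\<subseteq>X. finite S \<and> y = (\<lambda>i. if (\<exists>x\<in>S. x i = 1) then 1 else 0))"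

definition spans_set :: "((nat \<Rightarrow> nat) set \<Rightarrow> (nat \<Rightarrow> nat) \<Rightarrow> bool)
    \<Rightarrow> (nat \<Rightarrow> nat) set \<Rightarrow> (nat \<Rightarrow> nat) set \<Rightarrow> bool" where
  "spans_set sp X Y \<longleftrightarrow> (\<forall>y\<in>Y. sp X y)"

definition binary_matrix :: "nat \<Rightarrow> nat \<Rightarrow> (nat \<Rightarrow> nat \<Rightarrow> nat) \<Rightarrow> bool" where
  "binary_matrix n m A \<longleftrightarrow> (\<forall>i<n. \<forall>j<m. A i j \<in> {0,1})"

definition columns :: "nat \<Rightarrow> nat \<Rightarrow> (nat \<Rightarrow> nat \<Rightarrow> nat) \<Rightarrow> (nat \<Rightarrow> nat) set" where
  "columns n m A = {(\<lambda>i. if i < n then A i j else 0) | j. j < m}"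

definition spanning_set :: "((nat \<Rightarrow> nat) set \<Rightarrow> (nat \<Rightarrow> nat) \<Rightarrow> bool)
    \<Rightarrow> nat \<Rightarrow> nat \<Rightarrow> (nat \<Rightarrow> nat \<Rightarrow> nat) \<Rightarrow> (nat \<Rightarrow> nat) set \<Rightarrow> bool" where
  "spanning_set sp n m A U \<longleftrightarrow>
     finite U \<and> (\<forall>x\<in>U. zo_vec n x) \<and> spans_set sp U (columns n m A)"

definition is_base :: "((nat \<Rightarrow> nat) set \<Rightarrow> (nat \<Rightarrow> nat) \<Rightarrow> bool)
    \<Rightarrow> nat \<Rightarrow> nat \<Rightarrow> (nat \<Rightarrow> nat \<Rightarrow> nat) \<Rightarrow> (nat \<Rightarrow> nat) set \<Rightarrow> bool" where
  "is_base sp n m A U \<longleftrightarrow>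
     spanning_set sp n m A U \<and> (\<forall>V. spanning_set sp n m A V \<longrightarrow> card U \<le> card V)"

definition base_graph :: "((nat \<Rightarrow> nat) set \<Rightarrow> (nat \<Rightarrow> nat) \<Rightarrow> bool)
    \<Rightarrow> nat \<Rightarrow> nat \<Rightarrow> (nat \<Rightarrow> nat \<Rightarrow> nat) \<Rightarrow> ((nat \<Rightarrow> nat) set \<times> (nat \<Rightarrow> nat) set) set" where
  "base_graph sp n m A =
     {(U, V). is_base sp n m A U \<and> is_base sp n m A V \<and> U \<noteq> V \<and> spans_set sp U V}"

end

theory Submission
  imports Defs
begin

definition zo :: "(nat \<Rightarrow> nat) \<Rightarrow> bool" where
  "zo x \<longleftrightarrow> (\<forall>i. x i \<in> {0,1})"

locale good_sp =
  fixes sp :: "(nat \<Rightarrow> nat) set \<Rightarrow> (nat \<Rightarrow> nat) \<Rightarrow> bool"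
  assumes single: "\<And>X x. x \<in> X \<Longrightarrow> zo x \<Longrightarrow> sp X x"
    and trans: "\<And>X Y w. \<forall>x\<in>X. zo x \<Longrightarrow> \<forall>y\<in>Y. sp X y \<Longrightarrow> zo w \<Longrightarrow> sp Y w \<Longrightarrow> sp X w"
    and nec: "\<And>X X' y. \<forall>x\<in>X. zo x \<Longrightarrow> sp X y \<Longrightarrow> X' \<subseteq> X \<Longrightarrow> \<not> sp X' y
               \<Longrightarrow> \<exists>x\<in>X - X'. \<forall>i. x i \<le> y i"
begin

lemma base_zo: "is_base sp n m A U \<Longrightarrow> x \<in> U \<Longrightarrow> zo x"
  unfolding is_base_def spanning_set_def zo_vec_def zo_def by blast

lemma cols_zo: "binary_matrix n m A \<Longrightarrow> c \<in> columns n m A \<Longrightarrow> zo c"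
proof -
  assume bm: "binary_matrix n m A" and c: "c \<in> columns n m A"
  then obtain j where j: "j < m" "c = (\<lambda>i. if i < n then A i j else 0)"
    unfolding columns_def by blast
  show "zo c" unfolding zo_def
  proof
    fix i show "c i \<in> {0,1}"
      using bm j unfolding binary_matrix_def by (cases "i < n") auto
  qed
qed

lemma sub:
  assumes bm: "binary_matrix n m A" and bU: "is_base sp n m A U" and bV: "is_base sp n m A V"
    and UV: "spans_set sp U V" and VU: "spans_set sp V U"
  shows "U \<subseteq> V"
proof
  fix u assume uU: "u \<in> U"
  show "u \<in> V"
  proof (rule ccontr)
    assume uV: "u \<notin> V"
    have zU: "\<forall>x\<in>U. zo x" using bU base_zo by blast
    have zV: "\<forall>x\<in>V. zo x" using bV base_zo by blast
    have zU': "\<forall>x\<in>U-{u}. zo x" using zU by blast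
    have claim: "sp (U-{u}) u"
    proof (rule ccontr)
      assume nu: "\<not> sp (U-{u}) u"
      define V' where "V' = {v\<in>V. sp (U-{u}) v}"
      have "\<not> sp V' u"
      proof
        assume "sp V' u"
        then have "sp (U-{u}) u"
          using trans[OF zU', of V' u] zU uU unfolding V'_def by blast
        then show False using nu by blast
      qed
      moreover have "sp V u" using VU uU unfolding spans_set_def by blast
      ultimately obtain v where v: "v \<in> V - V'" "\<forall>i. v i \<le> u i"
        using nec[OF zV, of u V'] unfolding V'_def by blast
      have "sp U v" using UV v unfolding spans_set_def by blast
      moreover have "\<not> sp (U-{u}) v" using v unfolding V'_def by blast
      ultimately obtain x where x: "x \<in> U - (U-{u})" "\<forall>i. x i \<le> v i"
        using nec[OF zU, of v "U-{u}"] by blast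
      have "x = u" using x uU by blast
      then have "u = v" using x v by (intro ext) (simp add: le_antisym)
      then show False using uV v by blast
    qed
    have all: "\<forall>y\<in>U. sp (U-{u}) y"
    proof
      fix y assume yU: "y \<in> U"
      show "sp (U-{u}) y"
      proof (cases "y = u")
        case True then show ?thesis using claim by simp
      next
        case False
        then have "y \<in> U-{u}" using yU by simp
        moreover have "zo y" using zU yU by simp
        ultimately show ?thesis by (rule single)
      qed
    qed
    have "spans_set sp (U-{u}) (columns n m A)"
      unfolding spans_set_def
    proof
      fix c assume c: "c \<in> columns n m A"
      have "sp U c" using bU c unfolding is_base_def spanning_set_def spans_set_def by blast
      then show "sp (U-{u}) c" using trans[OF zU' all cols_zo[OF bm c]] by blast
    qed
    then have "spanning_set sp n m A (U-{u})"
      using bU unfolding is_base_def spanning_set_def by blast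
    then have "card U \<le> card (U-{u})" using bU unfolding is_base_def by blast
    moreover have "finite U" using bU unfolding is_base_def spanning_set_def by blast
    moreover have "card (U-{u}) < card U" using \<open>finite U\<close> uU by (rule card_Diff1_less)
    ultimately show False by simp
  qed
qed

lemma spans_trans:
  assumes bm: "binary_matrix n m A" and bU: "is_base sp n m A U" and bV: "is_base sp n m A V"
    and bW: "is_base sp n m A W"
    and UV: "spans_set sp U V" and VW: "spans_set sp V W"
  shows "spans_set sp U W"
  unfolding spans_set_def
proof
  fix w assume "w \<in> W"
  moreover have "\<forall>x\<in>U. zo x" using bU base_zo by blast
  ultimately show "sp U w"
    using trans[of U V w] UV VW bW base_zo unfolding spans_set_def by blast
qed

lemma acyc:
  assumes bm: "binary_matrix n m A"
  shows "acyclic (base_graph sp n m A)"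
proof -
  define S where "S = {(U,V). is_base sp n m A U \<and> is_base sp n m A V \<and> spans_set sp U V}"
  have tS: "trans S" unfolding trans_def S_def using spans_trans[OF bm] by blast
  have RS: "base_graph sp n m A \<subseteq> S" unfolding S_def base_graph_def by blast
  have "(base_graph sp n m A)\<^sup>+ \<subseteq> S"
  proof -
    have "(a,b) \<in> S" if "(a,b) \<in> (base_graph sp n m A)\<^sup>+" for a b
    using that
    proof (induct rule: trancl_induct)
      case (base y) then show ?case using RS by blast
    next
      case (step y z) then show ?case using RS tS unfolding trans_def by blast
    qed
    then show ?thesis by auto
  qed
  show ?thesis
    unfolding acyclic_def
  proof (intro allI notI)
    fix U assume "(U,U) \<in> (base_graph sp n m A)\<^sup>+"
    then obtain V where e: "(U,V) \<in> base_graph sp n m A" and r: "(V,U) \<in> (base_graph sp n m A)\<^sup>*"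
      by (blast dest: tranclD)
    have e': "is_base sp n m A U" "is_base sp n m A V" "U \<noteq> V" "spans_set sp U V"
      using e unfolding base_graph_def by auto
    have "V = U \<or> (V,U) \<in> S" using r \<open>(base_graph sp n m A)\<^sup>+ \<subseteq> S\<close>
      by (meson rtranclD subsetD)
    then have "spans_set sp V U" using e'(3) unfolding S_def by auto
    then have "U \<subseteq> V" "V \<subseteq> U" using sub[OF bm e'(1,2,4)] sub[OF bm e'(2,1)] e'(4) by auto
    then show False using e'(3) by blast
  qed
qed

end

lemma bin_good: "good_sp bin_spans"
proof
  fix X x assume "x \<in> X" "zo x"
  then show "bin_spans X x" unfolding bin_spans_def
    by (intro exI[of _ "{x}"]) auto
next
  fix X Y w
  assume zX: "\<forall>x\<in>X. zo x" and sY: "\<forall>y\<in>Y. bin_spans X y" and zw: "zo w" and bw: "bin_spans Y w"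
  obtain S where S: "S \<subseteq> Y" "finite S" "w = (\<lambda>i. \<Sum>y\<in>S. y i)"
    using bw unfolding bin_spans_def by blast
  have "\<forall>y\<in>S. \<exists>T. T \<subseteq> X \<and> finite T \<and> y = (\<lambda>i. \<Sum>x\<in>T. x i)"
    using sY S(1) unfolding bin_spans_def by blast
  then obtain f where f: "\<forall>y\<in>S. f y \<subseteq> X \<and> finite (f y) \<and> y = (\<lambda>i. \<Sum>x\<in>f y. x i)"
    by metis
  define S' where "S' = \<Union>(f ` S)"
  have finS': "finite S'" unfolding S'_def using S(2) f by blast
  have S'X: "S' \<subseteq> X" unfolding S'_def using f by blast
  have key: "w i = (\<Sum>x\<in>S'. x i)" for i
  proof -
    define g where "g x = (\<Sum>y\<in>{y\<in>S. x \<in> f y}. x i)" for x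
    have "w i = (\<Sum>y\<in>S. \<Sum>x\<in>f y. x i)"
      unfolding S(3) by (rule sum.cong[OF refl]) (use f in metis)
    also have "\<dots> = (\<Sum>y\<in>S. \<Sum>x\<in>{x\<in>S'. x \<in> f y}. x i)"
    proof (rule sum.cong[OF refl])
      fix y assume "y \<in> S"
      then have "{x\<in>S'. x \<in> f y} = f y" unfolding S'_def by blast
      then show "(\<Sum>x\<in>f y. x i) = (\<Sum>x\<in>{x\<in>S'. x \<in> f y}. x i)" by simp
    qed
    also have "\<dots> = (\<Sum>x\<in>S'. g x)"
      unfolding g_def by (rule sum.swap_restrict[OF S(2) finS'])
    finally have eq: "w i = (\<Sum>x\<in>S'. g x)" .
    have "g x = x i" if xS': "x \<in> S'" for x
    proof -
      have gc: "g x = card {y\<in>S. x \<in> f y} * x i" unfolding g_def by simp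
      have ne: "{y\<in>S. x \<in> f y} \<noteq> {}" using xS' unfolding S'_def by blast
      have "card {y\<in>S. x \<in> f y} > 0" using ne S(2) by (simp add: card_gt_0_iff)
      moreover have "g x \<le> w i" unfolding eq using finS' xS' by (intro member_le_sum) auto
      moreover have "w i \<le> 1"
      proof -
        have "w i \<in> {0,1}" using zw unfolding zo_def by blast
        then show ?thesis by auto
      qed
      moreover have "x i \<in> {0,1}" using zX S'X xS' unfolding zo_def by blast
      ultimately show ?thesis using gc by auto
    qed
    then show ?thesis using eq by (metis (no_types, lifting) sum.cong)
  qed
  show "bin_spans X w" unfolding bin_spans_def
    using finS' S'X key by blast
next
  fix X X' y
  assume zX: "\<forall>x\<in>X. zo x" and sy: "bin_spans X y" and sub: "X' \<subseteq> X" and ns: "\<not> bin_spans X' y"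
  obtain S where S: "S \<subseteq> X" "finite S" "y = (\<lambda>i. \<Sum>x\<in>S. x i)"
    using sy unfolding bin_spans_def by blast
  have "\<not> S \<subseteq> X'" using ns S unfolding bin_spans_def by blast
  then obtain x where x: "x \<in> S" "x \<notin> X'" by blast
  have "\<forall>i. x i \<le> y i" using S x by (auto intro!: member_le_sum)
  then show "\<exists>x\<in>X - X'. \<forall>i. x i \<le> y i" using x S by blast
qed

lemma bool_good: "good_sp bool_spans"
proof
  fix X x assume "x \<in> X" "zo x"
  moreover have "x = (\<lambda>i. if (\<exists>y\<in>{x}. y i = 1) then 1 else 0)"
  proof
    fix i have "x i \<in> {0,1}" using \<open>zo x\<close> unfolding zo_def by blast
    then show "x i = (if (\<exists>y\<in>{x}. y i = 1) then 1 else 0)" by auto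
  qed
  ultimately show "bool_spans X x" unfolding bool_spans_def
    by (intro exI[of _ "{x}"]) auto
next
  fix X Y w
  assume sY: "\<forall>y\<in>Y. bool_spans X y" and bw: "bool_spans Y w"
  obtain S where S: "S \<subseteq> Y" "finite S" "w = (\<lambda>i. if (\<exists>y\<in>S. y i = 1) then 1 else 0)"
    using bw unfolding bool_spans_def by blast
  have "\<forall>y\<in>S. \<exists>T. T \<subseteq> X \<and> finite T \<and> y = (\<lambda>i. if (\<exists>x\<in>T. x i = 1) then 1 else 0)"
    using sY S(1) unfolding bool_spans_def by blast
  then obtain f where f: "\<forall>y\<in>S. f y \<subseteq> X \<and> finite (f y) \<and> y = (\<lambda>i. if (\<exists>x\<in>f y. x i = 1) then 1 else 0)"
    by metis
  define S' where "S' = \<Union>(f ` S)"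
  have finS': "finite S'" unfolding S'_def using S(2) f by blast
  have S'X: "S' \<subseteq> X" unfolding S'_def using f by blast
  have "(\<exists>y\<in>S. y i = 1) \<longleftrightarrow> (\<exists>x\<in>S'. x i = 1)" for i
  proof
    assume "\<exists>y\<in>S. y i = 1"
    then obtain y where y: "y \<in> S" "y i = 1" by blast
    then have "\<exists>x\<in>f y. x i = 1" using f by (metis zero_neq_one)
    then show "\<exists>x\<in>S'. x i = 1" using y unfolding S'_def by blast
  next
    assume "\<exists>x\<in>S'. x i = 1"
    then obtain y x where "y \<in> S" "x \<in> f y" "x i = 1" unfolding S'_def by blast
    then have "y i = 1" using f by metis
    then show "\<exists>y\<in>S. y i = 1" using \<open>y \<in> S\<close> by blast
  qed
  then show "bool_spans X w" unfolding bool_spans_def using S(3) finS' S'X by auto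
next
  fix X X' y
  assume zX: "\<forall>x\<in>X. zo x" and sy: "bool_spans X y" and sub: "X' \<subseteq> X" and ns: "\<not> bool_spans X' y"
  obtain S where S: "S \<subseteq> X" "finite S" "y = (\<lambda>i. if (\<exists>x\<in>S. x i = 1) then 1 else 0)"
    using sy unfolding bool_spans_def by blast
  have "\<not> S \<subseteq> X'" using ns S unfolding bool_spans_def by blast
  then obtain x where x: "x \<in> S" "x \<notin> X'" by blast
  have "\<forall>i. x i \<le> y i"
  proof
    fix i
    have "x i \<in> {0,1}" using zX S(1) x(1) unfolding zo_def by blast
    then show "x i \<le> y i" using S(3) x(1) by auto
  qed
  then show "\<exists>x\<in>X - X'. \<forall>i. x i \<le> y i" using x S by blast
qed

theorem mainTheorem16:
  fixes n m :: nat and A :: "nat \<Rightarrow> nat \<Rightarrow> nat"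
  assumes "binary_matrix n m A"
  shows "acyclic (base_graph bin_spans n m A) \<and> acyclic (base_graph bool_spans n m A)"
  using good_sp.acyc[OF bin_good assms] good_sp.acyc[OF bool_good assms] by blast

end
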